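(* Let $K^G, K^F, T \ge 1$ be integers and $p = K^G + T K^F$. Let $\boldsymbol{\Sigma}$ be a $p \times p$ symmetric positive definite matrix partitioned into blocks (rows and columns indexed first by a $G$-block of size $K^G$ and then by $K^F$ consecutive $F$-blocks $F_1,\dots,F_{K^F}$, each of size $T$) of the form $$\boldsymbol{\Sigma}=\begin{bmatrix} \boldsymbol{\Sigma}_{GG} & \boldsymbol{\Sigma}_{GF_1} & \cdots & \boldsymbol{\Sigma}_{GF_{K^F}} \\ \boldsymbol{\Sigma}_{GF_1}^\intercal & \boldsymbol{\Sigma}_{F_1F_1} & & \boldsymbol{0} \\ \vdots & & \ddots & \\ \boldsymbol{\Sigma}_{GF_{K^F}}^\intercal & \boldsymbol{0} & & \boldsymbol{\Sigma}_{F_{K^F}F_{K^F}} \end{bmatrix},$$ where $\boldsymbol{\Sigma}_{GG}$ is a $K^G\times K^G$ diagonal matrix, each $\boldsymbol{\Sigma}_{F_kF_k}$ is $T\times T$, each $\boldsymbol{\Sigma}_{GF_k}$ is $K^G \times T$, and all blocks between $F_k$ and $F_l$ with $k\neq l$ are zero. For $k_1,k_2\in\{1,\dots,K^F\}$ write $k_1\sim k_2$ if and only if there exists $g\in\{1,\dots,K^G\}$ such that the $g$-th row of $\boldsymbol{\Sigma}_{GF_{k_1}}$ and the $g$-th row of $\boldsymbol{\Sigma}_{GF_{k_2}}$ are both nonzero vectors, and assume that $\sim$ is a partial equivalence relation (i.e., it is transitive; it is symmetric by definition). Let $\boldsymbol{\Sigma}^{-1}=\mathbf{L}^\intercal\mathbf{D}^{-1}\mathbf{L}$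 be the (unique) decomposition with $\mathbf{L}$ lower triangular with unit diagonal and $\mathbf{D}$ diagonal with positive entries, and set $\boldsymbol{\zeta}=\mathbf{I}-\mathbf{L}$ with entries $\zeta_{ji}$. Then for all $k_1<k_2$ in $\{1,\dots,K^F\}$ with $k_1\nsim k_2$, we have $\zeta_{ji}=0$ for all $i\in\{K^G+(k_1-1)T+1,\dots,K^G+k_1T\}$ and all $j\in\{K^G+(k_2-1)T+1,\dots,K^G+k_2T\}$.
   Context: Equivalently, if $(\gamma_1,\dots,\gamma_p)$ is a mean-zero random vector with covariance $\boldsymbol{\Sigma}$, then for $j>1$, $(\zeta_{j1},\dots,\zeta_{j,j-1})$ are the coefficients of the best linear predictor of $\gamma_j$ from $\gamma_1,\dots,\gamma_{j-1}$ (with $\zeta_{jk}=0$ for $k\ge j$), and $\mathbf{D}$ is the diagonal matrix of the corresponding residual variances. In the paper, $\boldsymbol{\Sigma}=\boldsymbol{\Sigma}_{\boldsymbol{\gamma}}+\sigma_\epsilon^2\mathbf{I}_p$ is the covariance of combined random effects and errors for geometric principal component projections (the $G$-block) and time series of length $T$ of projections on $K^F$ functional principal components (the $F$-blocks). *)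

theory Defs
  imports "Jordan_Normal_Form.Matrix"
begin

text \<open>Matrices are Jordan_Normal_Form matrices with 0-based indices.
  G-block: indices 0..<KG.  F-block number k (1-based, k = 1..KF):
  indices KG+(k-1)*T ..< KG+k*T.\<close>

definition fblock :: "nat \<Rightarrow> nat \<Rightarrow> nat \<Rightarrow> nat set" where
  "fblock KG T k = {KG + (k - 1) * T ..< KG + k * T}"

definition sym_mat :: "real mat \<Rightarrow> bool" where
  "sym_mat A \<longleftrightarrow> transpose_mat A = A"

definition pos_def_mat :: "nat \<Rightarrow> real mat \<Rightarrow> bool" where
  "pos_def_mat n A \<longleftrightarrow> A \<in> carrier_mat n n \<and>
     (\<forall>v \<in> carrier_vec n. v \<noteq> 0\<^sub>v n \<longrightarrow> v \<bullet> (A *\<^sub>v v) > 0)"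

definition unit_lower_triangular :: "nat \<Rightarrow> real mat \<Rightarrow> bool" where
  "unit_lower_triangular n L \<longleftrightarrow> L \<in> carrier_mat n n \<and>
     (\<forall>i<n. L $$ (i, i) = 1) \<and> (\<forall>i<n. \<forall>j<n. i < j \<longrightarrow> L $$ (i, j) = 0)"

definition pos_diagonal :: "nat \<Rightarrow> real mat \<Rightarrow> bool" where
  "pos_diagonal n D \<longleftrightarrow> D \<in> carrier_mat n n \<and>
     (\<forall>i<n. D $$ (i, i) > 0) \<and> (\<forall>i<n. \<forall>j<n. i \<noteq> j \<longrightarrow> D $$ (i, j) = 0)"

definition diag_inv :: "nat \<Rightarrow> real mat \<Rightarrow> real mat" where
  "diag_inv n D = mat n n (\<lambda>(i, j). if i = j then 1 / D $$ (i, i) else 0)"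

definition frel :: "nat \<Rightarrow> nat \<Rightarrow> real mat \<Rightarrow> nat \<Rightarrow> nat \<Rightarrow> bool" where
  "frel KG T S k1 k2 \<longleftrightarrow> (\<exists>g<KG.
      (\<exists>t\<in>fblock KG T k1. S $$ (g, t) \<noteq> 0) \<and> (\<exists>t\<in>fblock KG T k2. S $$ (g, t) \<noteq> 0))"

end

theory Submission
  imports Defs
begin

lemma mult_entry:
  fixes A B :: "real mat"
  assumes "A \<in> carrier_mat n n" "B \<in> carrier_mat n n" "i < n" "j < n"
  shows "(A * B) $$ (i, j) = (\<Sum>k<n. A $$ (i, k) * B $$ (k, j))"
  using assms by (auto simp: scalar_prod_def lessThan_atLeast0 intro!: sum.cong)

lemma upper_inv:
  fixes U Q :: "real mat"
  assumes U: "U \<in> carrier_mat p p" and Q: "Q \<in> carrier_mat p p"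
    and UQ: "U * Q = 1\<^sub>m p"
    and Ulow: "\<forall>r<p. \<forall>s<p. s < r \<longrightarrow> U $$ (r, s) = 0"
    and Udiag: "\<forall>r<p. U $$ (r, r) \<noteq> 0"
    and m: "m < p"
  shows "\<forall>r. m < r \<longrightarrow> r < p \<longrightarrow> Q $$ (r, m) = 0"
proof (intro allI impI)
  fix r assume "m < r" "r < p"
  then show "Q $$ (r, m) = 0"
  proof (induction "p - r" arbitrary: r rule: less_induct)
    case (less r)
    have "(U * Q) $$ (r, m) = 0" using UQ less.prems m by simp
    also have "(U * Q) $$ (r, m) = (\<Sum>s<p. U $$ (r, s) * Q $$ (s, m))"
      using mult_entry[OF U Q] less.prems m by simp
    also have "\<dots> = (\<Sum>s\<in>{r}. U $$ (r, s) * Q $$ (s, m))"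
    proof (rule sum.mono_neutral_right)
      show "\<forall>s\<in>{..<p} - {r}. U $$ (r, s) * Q $$ (s, m) = 0"
      proof
        fix s assume s: "s \<in> {..<p} - {r}"
        show "U $$ (r, s) * Q $$ (s, m) = 0"
        proof (cases "s < r")
          case True then show ?thesis using Ulow less.prems s by auto
        next
          case False
          then have "r < s" using s by auto
          then have "Q $$ (s, m) = 0" using less.hyps[of s] less.prems s by auto
          then show ?thesis by simp
        qed
      qed
    qed (use less.prems in auto)
    finally show ?case using Udiag less.prems by simp
  qed
qed


lemma block_of:
  assumes "KG \<le> n" "n < KG + T * KF"
  shows "\<exists>l\<in>{1..KF}. n \<in> fblock KG T l"
proof -
  have T: "T > 0" using assms by (cases T) auto
  define l where "l = (n - KG) div T + 1"
  have dm: "(n - KG) div T * T + (n - KG) mod T = n - KG" by (rule div_mult_mod_eq)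
  have ml: "(n - KG) mod T < T" using T by simp
  have a: "(n - KG) div T * T \<le> n - KG" using dm by linarith
  have e: "((n - KG) div T + 1) * T = (n - KG) div T * T + T" by simp
  have b: "n - KG < ((n - KG) div T + 1) * T" using dm ml e by linarith
  have c: "(n - KG) div T < KF"
    using assms T by (simp add: div_less_iff_less_mult mult.commute)
  have a2: "KG + (n - KG) div T * T \<le> n" using a assms by linarith
  have b2: "n < KG + ((n - KG) div T + 1) * T" using b assms by linarith
  have "n \<in> fblock KG T l" unfolding fblock_def l_def using a2 b2 by simp
  moreover have "l \<in> {1..KF}" using c l_def by auto
  ultimately show ?thesis by blast
qed

lemma block_disj:
  assumes "a \<ge> 1" "b \<ge> 1" "n \<in> fblock KG T a" "n \<in> fblock KG T b"
  shows "a = b"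
proof (rule ccontr)
  assume "a \<noteq> b"
  then consider "a < b" | "b < a" by linarith
  then show False
  proof cases
    case 1
    then have "a * T \<le> (b - 1) * T" by (intro mult_le_mono1) auto
    moreover have "KG + (b - 1) * T \<le> n" "n < KG + a * T" using assms unfolding fblock_def by auto
    ultimately show False by linarith
  next
    case 2
    then have "b * T \<le> (a - 1) * T" by (intro mult_le_mono1) auto
    moreover have "KG + (a - 1) * T \<le> n" "n < KG + b * T" using assms unfolding fblock_def by auto
    ultimately show False by linarith
  qed
qed

lemma block_ge: "n \<in> fblock KG T a \<Longrightarrow> KG \<le> n"
  unfolding fblock_def by auto

lemma block_lt: "n \<in> fblock KG T a \<Longrightarrow> a \<le> KF \<Longrightarrow> n < KG + T * KF"
proof -
  assume "n \<in> fblock KG T a" "a \<le> KF"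
  then have "n < KG + a * T" unfolding fblock_def by auto
  moreover have "a * T \<le> KF * T" using \<open>a \<le> KF\<close> by (rule mult_le_mono1)
  ultimately have "n < KG + KF * T" by linarith
  then show ?thesis by (simp add: mult.commute)
qed

theorem proposition1:
  fixes KG KF T p :: nat and Sigma L D :: "real mat"
  assumes "KG \<ge> 1" and "KF \<ge> 1" and "T \<ge> 1"
    and p_def: "p = KG + T * KF"
    and "sym_mat Sigma" and "pos_def_mat p Sigma"
    and GG_diag: "\<forall>g<KG. \<forall>h<KG. g \<noteq> h \<longrightarrow> Sigma $$ (g, h) = 0"
    and FF_zero: "\<forall>k\<in>{1..KF}. \<forall>l\<in>{1..KF}. k \<noteq> l \<longrightarrow>
        (\<forall>i\<in>fblock KG T k. \<forall>j\<in>fblock KG T l. Sigma $$ (i, j) = 0)"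
    and trans: "\<forall>a\<in>{1..KF}. \<forall>b\<in>{1..KF}. \<forall>c\<in>{1..KF}.
        frel KG T Sigma a b \<longrightarrow> frel KG T Sigma b c \<longrightarrow> frel KG T Sigma a c"
    and "unit_lower_triangular p L" and "pos_diagonal p D"
    and inv: "Sigma * (transpose_mat L * diag_inv p D * L) = 1\<^sub>m p"
  shows "\<forall>k1\<in>{1..KF}. \<forall>k2\<in>{1..KF}. k1 < k2 \<longrightarrow> \<not> frel KG T Sigma k1 k2 \<longrightarrow>
           (\<forall>i\<in>fblock KG T k1. \<forall>j\<in>fblock KG T k2. (1\<^sub>m p - L) $$ (j, i) = 0)"
proof -
  have S: "Sigma \<in> carrier_mat p p" using \<open>pos_def_mat p Sigma\<close> pos_def_mat_def by blast
  have Lc: "L \<in> carrier_mat p p" using \<open>unit_lower_triangular p L\<close> unit_lower_triangular_def by blast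
  have Ldiag: "\<forall>i<p. L $$ (i, i) = 1" and Lup: "\<forall>i<p. \<forall>j<p. i < j \<longrightarrow> L $$ (i, j) = 0"
    using \<open>unit_lower_triangular p L\<close> unit_lower_triangular_def by blast+
  have Dc: "D \<in> carrier_mat p p" and Dpos: "\<forall>i<p. D $$ (i, i) > 0"
    using \<open>pos_diagonal p D\<close> pos_diagonal_def by blast+
  define Di where "Di = diag_inv p D"
  have Dic: "Di \<in> carrier_mat p p" unfolding Di_def diag_inv_def by simp
  have DiT: "transpose_mat Di = Di"
    by (rule eq_matI) (auto simp: Di_def diag_inv_def)
  have Ssym: "\<And>a b. a < p \<Longrightarrow> b < p \<Longrightarrow> Sigma $$ (a, b) = Sigma $$ (b, a)"
  proof -
    fix a b assume "a < p" "b < p"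
    have "transpose_mat Sigma $$ (a, b) = Sigma $$ (b, a)" using S \<open>a < p\<close> \<open>b < p\<close> by simp
    then show "Sigma $$ (a, b) = Sigma $$ (b, a)" using \<open>sym_mat Sigma\<close> sym_mat_def by metis
  qed
  have ST: "transpose_mat Sigma = Sigma" using \<open>sym_mat Sigma\<close> sym_mat_def by metis
  define U where "U = transpose_mat L * Di"
  define Q where "Q = L * Sigma"
  have Uc: "U \<in> carrier_mat p p" unfolding U_def using Lc Dic by auto
  have Qc: "Q \<in> carrier_mat p p" unfolding Q_def using Lc S by auto
  have "transpose_mat (Sigma * (transpose_mat L * Di * L)) = 1\<^sub>m p"
    using inv Di_def by simp
  also have "transpose_mat (Sigma * (transpose_mat L * Di * L))
      = transpose_mat (transpose_mat L * Di * L) * Sigma"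
    using transpose_mult[OF S, of "transpose_mat L * Di * L" p] Lc Dic ST by simp
  also have "transpose_mat (transpose_mat L * Di * L) = transpose_mat L * (Di * L)"
    using transpose_mult[of "transpose_mat L * Di" p p L p] Lc Dic
      transpose_mult[of "transpose_mat L" p p Di p] DiT by simp
  finally have "transpose_mat L * (Di * L) * Sigma = 1\<^sub>m p" .
  moreover have "transpose_mat L * (Di * L) * Sigma = transpose_mat L * ((Di * L) * Sigma)"
    by (rule assoc_mult_mat[of _ p p _ p _ p]) (use Lc Dic S in auto)
  moreover have "(Di * L) * Sigma = Di * (L * Sigma)"
    by (rule assoc_mult_mat[of _ p p _ p _ p]) (use Lc Dic S in auto)
  moreover have "transpose_mat L * (Di * (L * Sigma)) = (transpose_mat L * Di) * (L * Sigma)"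
    by (rule assoc_mult_mat[symmetric, of _ p p _ p _ p]) (use Lc Dic S in auto)
  ultimately have UQ: "U * Q = 1\<^sub>m p" unfolding U_def Q_def by simp
  have Uent: "\<And>r s. r < p \<Longrightarrow> s < p \<Longrightarrow> U $$ (r, s) = L $$ (s, r) / D $$ (s, s)"
  proof -
    fix r s assume rs: "r < p" "s < p"
    have "U $$ (r, s) = (\<Sum>t<p. transpose_mat L $$ (r, t) * Di $$ (t, s))"
      unfolding U_def using mult_entry[of "transpose_mat L" p Di] Lc Dic rs by simp
    also have "\<dots> = (\<Sum>t<p. if t = s then L $$ (s, r) / D $$ (s, s) else 0)"
      using Lc rs by (intro sum.cong) (auto simp: Di_def diag_inv_def)
    also have "\<dots> = L $$ (s, r) / D $$ (s, s)" using rs by simp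
    finally show "U $$ (r, s) = L $$ (s, r) / D $$ (s, s)" .
  qed
  have Qlow: "\<And>r m. m < r \<Longrightarrow> r < p \<Longrightarrow> Q $$ (r, m) = 0"
  proof -
    fix r m assume "m < r" "r < p"
    have "\<forall>r. m < r \<longrightarrow> r < p \<longrightarrow> Q $$ (r, m) = 0"
    proof (rule upper_inv[OF Uc Qc UQ])
      show "\<forall>r<p. \<forall>s<p. s < r \<longrightarrow> U $$ (r, s) = 0" using Uent Lup by auto
      show "\<forall>r<p. U $$ (r, r) \<noteq> 0"
      proof (intro allI impI)
        fix r assume "r < p"
        then have "D $$ (r, r) > 0" "L $$ (r, r) = 1" using Dpos Ldiag by auto
        then show "U $$ (r, r) \<noteq> 0" using Uent \<open>r < p\<close> by simp
      qed
      show "m < p" using \<open>m < r\<close> \<open>r < p\<close> by simp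
    qed
    then show "Q $$ (r, m) = 0" using \<open>m < r\<close> \<open>r < p\<close> by blast
  qed
  show ?thesis
  proof (intro ballI impI)
    fix k1 k2 i j
    assume k1: "k1 \<in> {1..KF}" and k2: "k2 \<in> {1..KF}" and lt: "k1 < k2"
      and nrel: "\<not> frel KG T Sigma k1 k2"
      and i: "i \<in> fblock KG T k1" and j: "j \<in> fblock KG T k2"
    define touch where "touch g b \<longleftrightarrow> (\<exists>t\<in>fblock KG T b. Sigma $$ (g, t) \<noteq> 0)" for g b
    define Bs where "Bs = {b \<in> {1..KF}. b = k2 \<or> frel KG T Sigma b k2}"
    define Y where "Y = {n. n < p \<and> (n < KG \<longrightarrow> \<not>(\<exists>b\<in>Bs. touch n b)) \<and> (\<forall>b\<in>Bs. n \<notin> fblock KG T b)}"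
    have frel_touch: "\<And>g a b. g < KG \<Longrightarrow> touch g a \<Longrightarrow> touch g b \<Longrightarrow> frel KG T Sigma a b"
      unfolding frel_def touch_def by blast
    have sep: "\<And>k m. k < p \<Longrightarrow> k \<notin> Y \<Longrightarrow> m \<in> Y \<Longrightarrow> Sigma $$ (k, m) = 0"
    proof -
      fix k m assume kp: "k < p" and kY: "k \<notin> Y" and mY: "m \<in> Y"
      have mp: "m < p" using mY Y_def by auto
      from kY kp obtain b where b: "b \<in> Bs" "(k < KG \<and> touch k b) \<or> k \<in> fblock KG T b"
        unfolding Y_def by auto
      have bK: "b \<in> {1..KF}" using b Bs_def by auto
      show "Sigma $$ (k, m) = 0"
      proof (cases "m < KG")
        case True
        then have mt: "\<not> touch m b" using mY b(1) Y_def by auto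
        from b(2) show ?thesis
        proof
          assume kb: "k < KG \<and> touch k b"
          then have "m \<noteq> k" using mt by auto
          then show ?thesis using GG_diag True kb by auto
        next
          assume kb: "k \<in> fblock KG T b"
          have "Sigma $$ (m, k) = 0" using mt kb unfolding touch_def by auto
          then show ?thesis using Ssym kp mp by simp
        qed
      next
        case False
        then obtain l where l: "l \<in> {1..KF}" "m \<in> fblock KG T l"
          using block_of[of KG m T KF] mp p_def by auto
        have lB: "l \<notin> Bs" using mY l(2) Y_def by auto
        from b(2) show ?thesis
        proof
          assume kb: "k < KG \<and> touch k b"
          show ?thesis
          proof (rule ccontr)
            assume "Sigma $$ (k, m) \<noteq> 0"
            then have "touch k l" using l(2) touch_def by auto
            then have flb: "frel KG T Sigma l b" using frel_touch kb by blast
            have "frel KG T Sigma l k2"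
            proof (cases "b = k2")
              case True then show ?thesis using flb by simp
            next
              case False then have "frel KG T Sigma b k2" using b(1) Bs_def by auto
              then show ?thesis using trans l(1) bK k2 flb by blast
            qed
            then show False using lB l(1) Bs_def by auto
          qed
        next
          assume kb: "k \<in> fblock KG T b"
          have "l \<noteq> b" using lB b(1) by auto
          then have "b \<noteq> l" by simp
          then have "\<forall>i\<in>fblock KG T b. \<forall>j\<in>fblock KG T l. Sigma $$ (i, j) = 0"
            using bspec[OF bspec[OF FF_zero bK] l(1)] by simp
          then show ?thesis using kb l(2) by simp
        qed
      qed
    qed
    have k1ge: "k1 \<ge> 1" and k2ge: "k2 \<ge> 1" using k1 k2 by auto
    have ip: "i < p" using block_lt[OF i] k1 p_def by auto
    have jp: "j < p" using block_lt[OF j] k2 p_def by auto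
    have iY: "i \<in> Y"
    proof -
      have "KG \<le> i" using block_ge[OF i] .
      moreover have "\<forall>b\<in>Bs. i \<notin> fblock KG T b"
      proof
        fix b assume bB: "b \<in> Bs"
        show "i \<notin> fblock KG T b"
        proof
          assume "i \<in> fblock KG T b"
          then have "b = k1" using block_disj[OF _ k1ge _ i] bB Bs_def by auto
          then show False using bB Bs_def lt nrel by auto
        qed
      qed
      ultimately show ?thesis using ip Y_def by auto
    qed
    have jY: "j \<notin> Y" using j k2 Y_def Bs_def by auto
    have ij: "i < j"
    proof -
      have "k1 * T \<le> (k2 - 1) * T" using lt by (intro mult_le_mono1) auto
      moreover have "i < KG + k1 * T" "KG + (k2 - 1) * T \<le> j" using i j unfolding fblock_def by auto
      ultimately show ?thesis by linarith
    qed
    define Y' where "Y' = Y \<inter> {..<j}"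
    define v where "v = vec p (\<lambda>k. if k \<in> Y' then L $$ (j, k) else 0)"
    have vc: "v \<in> carrier_vec p" by (simp add: v_def)
    have Sv: "\<And>m. m < p \<Longrightarrow> v $ m \<noteq> 0 \<Longrightarrow> (Sigma *\<^sub>v v) $ m = 0"
    proof -
      fix m assume mp: "m < p" and vm: "v $ m \<noteq> 0"
      then have mY': "m \<in> Y'" using v_def by (auto split: if_splits)
      then have mY: "m \<in> Y" and mj: "m < j" using Y'_def by auto
      have "(Sigma *\<^sub>v v) $ m = (\<Sum>k<p. Sigma $$ (m, k) * v $ k)"
        using S mp vc by (auto simp: scalar_prod_def lessThan_atLeast0 intro!: sum.cong)
      also have "\<dots> = (\<Sum>k<p. L $$ (j, k) * Sigma $$ (k, m))"
      proof (rule sum.cong[OF refl])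
        fix k assume "k \<in> {..<p}"
        then have kp: "k < p" by simp
        show "Sigma $$ (m, k) * v $ k = L $$ (j, k) * Sigma $$ (k, m)"
        proof (cases "k \<in> Y'")
          case True then show ?thesis using v_def kp Ssym[OF mp kp] by simp
        next
          case False
          have "L $$ (j, k) * Sigma $$ (k, m) = 0"
          proof (cases "j < k")
            case True then show ?thesis using Lup jp kp by simp
          next
            case False
            then have "k = j \<or> k < j" by auto
            then have "k \<notin> Y" using \<open>k \<notin> Y'\<close> jY Y'_def by auto
            then show ?thesis using sep kp mY by simp
          qed
          then show ?thesis using False v_def kp by simp
        qed
      qed
      also have "\<dots> = Q $$ (j, m)"
        unfolding Q_def using mult_entry[OF Lc S jp mp] by simp
      also have "\<dots> = 0" using Qlow mj jp by simp
      finally show "(Sigma *\<^sub>v v) $ m = 0" .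
    qed
    have "v \<bullet> (Sigma *\<^sub>v v) = (\<Sum>m<p. v $ m * (Sigma *\<^sub>v v) $ m)"
      using S by (simp add: scalar_prod_def lessThan_atLeast0)
    also have "\<dots> = 0"
      using Sv by (intro sum.neutral) (metis lessThan_iff mult_eq_0_iff)
    finally have "v \<bullet> (Sigma *\<^sub>v v) = 0" .
    then have "v = 0\<^sub>v p" using \<open>pos_def_mat p Sigma\<close> vc unfolding pos_def_mat_def by force
    then have "v $ i = 0" using ip by simp
    moreover have "i \<in> Y'" using iY ij Y'_def by auto
    ultimately have "L $$ (j, i) = 0" using v_def ip by simp
    then show "(1\<^sub>m p - L) $$ (j, i) = 0" using Lc ip jp ij by simp
  qed
qed

end
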